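(* Let $f_0,f_1\in \mathrm{PL}_0(\mathbf{I})$ satisfy $[f_1^{f_0},f_0f_1^{-1}]=1$ and $[f_0f_1^{-1},f_1^{f_0^2}]=1$. If $A$ is an orbital of $f_0$, then either there exists an orbital $B$ of $f_1$ with $B\subseteq A$, or $A$ is disjoint from $\operatorname{Supp}(f_1)$.
   Context: $\mathrm{PL}_0(\mathbf{I})$ is the group of orientation-preserving piecewise-linear homeomorphisms of $[0,1]$ with finitely many points of non-differentiability. Functions act on the right: $tf=f(t)$, $fg=g\circ f$, $a^b=b^{-1}ab$, $[a,b]=aba^{-1}b^{-1}$. The orbitals of $f$ are the connected components (open intervals) of $\operatorname{Supp}(f)=\{x: xf\ne x\}$. *)

theory Defs
  imports "HOL-Analysis.Analysis"
begin

text \<open>Elements of PL_0(I), represented as functions real => real that are the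
  identity outside [0,1] (a normalisation convention).\<close>
definition pl0 :: "(real \<Rightarrow> real) \<Rightarrow> bool" where
  "pl0 f \<longleftrightarrow>
     (\<forall>x. x \<notin> {0..1} \<longrightarrow> f x = x) \<and>
     f 0 = 0 \<and> f 1 = 1 \<and>
     strict_mono_on {0..1} f \<and>
     continuous_on {0..1} f \<and>
     f ` {0..1} = {0..1} \<and>
     (\<exists>P. finite P \<and> P \<subseteq> {0..1} \<and> {0, 1} \<subseteq> P \<and>
        (\<forall>a\<in>P. \<forall>b\<in>P. a < b \<and> {a<..<b} \<inter> P = {} \<longrightarrow>
           (\<exists>m c. \<forall>x\<in>{a..b}. f x = m * x + c)))"

text \<open>Right action: t(fg) = g(f(t)), so the product fg is g o f.\<close>
definition pl_mult :: "(real \<Rightarrow> real) \<Rightarrow> (real \<Rightarrow> real) \<Rightarrow> (real \<Rightarrow> real)" where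
  "pl_mult f g = g \<circ> f"

definition pl_inv :: "(real \<Rightarrow> real) \<Rightarrow> (real \<Rightarrow> real)" where
  "pl_inv f = inv f"

definition pl_conj :: "(real \<Rightarrow> real) \<Rightarrow> (real \<Rightarrow> real) \<Rightarrow> (real \<Rightarrow> real)" where
  "pl_conj a b = pl_mult (pl_mult (pl_inv b) a) b"

definition pl_comm :: "(real \<Rightarrow> real) \<Rightarrow> (real \<Rightarrow> real) \<Rightarrow> (real \<Rightarrow> real)" where
  "pl_comm a b = pl_mult (pl_mult (pl_mult a b) (pl_inv a)) (pl_inv b)"

definition pl_supp :: "(real \<Rightarrow> real) \<Rightarrow> real set" where
  "pl_supp f = {x. f x \<noteq> x}"

definition orbitals :: "(real \<Rightarrow> real) \<Rightarrow> real set set" where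
  "orbitals f = components (pl_supp f)"

end

theory Submission
  imports Defs
begin


definition hm :: "(real \<Rightarrow> real) \<Rightarrow> bool" where
  "hm u \<longleftrightarrow> strict_mono u \<and> surj u"

lemma hm_mono: "hm u \<Longrightarrow> x < y \<Longrightarrow> u x < u y"
  by (auto simp: hm_def strict_mono_def)

lemma hm_mono_iff: "hm u \<Longrightarrow> u x < u y \<longleftrightarrow> x < y"
  by (auto simp: hm_def strict_mono_less)

lemma hm_le_iff: "hm u \<Longrightarrow> u x \<le> u y \<longleftrightarrow> x \<le> y"
  by (auto simp: hm_def strict_mono_less_eq)

lemma hm_inj: "hm u \<Longrightarrow> u x = u y \<longleftrightarrow> x = y"
  by (auto simp: hm_def strict_mono_eq)

lemma hm_cont: assumes "hm u" shows "isCont u x"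
  unfolding continuous_at_eps_delta
proof (intro allI impI)
  fix e :: real assume e: "e > 0"
  from assms have su: "surj u" by (auto simp: hm_def)
  obtain a where a: "u a = u x - e" using su by (metis surjD)
  obtain b where b: "u b = u x + e" using su by (metis surjD)
  have ax: "a < x" using hm_mono_iff[OF assms, of a x] a e by simp
  have xb: "x < b" using hm_mono_iff[OF assms, of x b] b e by simp
  show "\<exists>d>0. \<forall>y. dist y x < d \<longrightarrow> dist (u y) (u x) < e"
  proof (intro exI[of _ "min (x - a) (b - x)"] conjI allI impI)
    show "min (x - a) (b - x) > 0" using ax xb by simp
    fix y assume "dist y x < min (x - a) (b - x)"
    then have "a < y" "y < b" by (auto simp: dist_real_def)
    then have "u a < u y" "u y < u b" using hm_mono[OF assms] by auto
    then show "dist (u y) (u x) < e" using a b by (auto simp: dist_real_def)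
  qed
qed

lemma hm_cont_on: "hm u \<Longrightarrow> continuous_on UNIV u"
  by (simp add: continuous_at_imp_continuous_on hm_cont)

lemma hm_inv_f: "hm u \<Longrightarrow> u (inv u y) = y"
  by (auto simp: hm_def surj_f_inv_f)

lemma hm_f_inv: "hm u \<Longrightarrow> inv u (u y) = y"
  by (auto simp: hm_def strict_mono_imp_inj_on inv_f_f)

lemma hm_inv: assumes "hm u" shows "hm (inv u)"
  unfolding hm_def
proof
  show "strict_mono (inv u)"
  proof (rule strict_monoI)
    fix x y :: real assume "x < y"
    then show "inv u x < inv u y"
      using hm_mono_iff[OF assms, of "inv u x" "inv u y"] hm_inv_f[OF assms] by simp
  qed
  show "surj (inv u)"
    by (metis hm_f_inv[OF assms] surjI)
qed

lemma hm_comp: "hm u \<Longrightarrow> hm v \<Longrightarrow> hm (\<lambda>x. u (v x))"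
proof -
  assume hu: "hm u" and hv: "hm v"
  have "strict_mono (\<lambda>x. u (v x))" using hu hv by (auto simp: hm_def strict_mono_def)
  moreover have "surj (\<lambda>x. u (v x))"
  proof -
    have "y \<in> range (\<lambda>x. u (v x))" for y
    proof -
      obtain z where z: "y = u z" using hu by (auto simp: hm_def dest: surjD)
      obtain w where w: "z = v w" using hv by (auto simp: hm_def dest: surjD)
      show ?thesis using z w by auto
    qed
    then show ?thesis by auto
  qed
  ultimately show ?thesis by (simp add: hm_def)
qed

lemma hm_id: "hm (\<lambda>x. x)"
  by (auto simp: hm_def strict_mono_def)

lemma pl0_hm: assumes "pl0 f" shows "hm f"
proof -
  have id_out: "\<And>x. x \<notin> {0..1} \<Longrightarrow> f x = x" and sm: "strict_mono_on {0..1} f"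
    and im: "f ` {0..1} = {0..1}"
    using assms by (auto simp: pl0_def)
  have into: "\<And>x. x \<in> {0..1} \<Longrightarrow> f x \<in> {0..1}" using im by auto
  have "strict_mono f"
  proof (rule strict_monoI)
    fix x y :: real assume xy: "x < y"
    show "f x < f y"
    proof (cases "x \<in> {0..1}")
      case True
      show ?thesis
      proof (cases "y \<in> {0..1}")
        case True
        with \<open>x \<in> {0..1}\<close> xy sm show ?thesis by (auto simp: strict_mono_on_def)
      next
        case False
        then have "y > 1" using xy True by auto
        then show ?thesis using into[OF True] id_out[OF False] by auto
      qed
    next
      case False
      show ?thesis
      proof (cases "x < 0")
        case True
        then show ?thesis using id_out[OF False] into[of y] id_out[of y] xy
          by (cases "y \<in> {0..1}") auto
      next
        case False2: False
        then have "x > 1" using False by auto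
        then show ?thesis using id_out[OF False] id_out[of y] xy by auto
      qed
    qed
  qed
  moreover have "surj f"
  proof -
    have "y \<in> range f" for y
    proof (cases "y \<in> {0..1}")
      case True
      then have "y \<in> f ` {0..1}" using im by simp
      then show ?thesis by auto
    next
      case False then show ?thesis using id_out[OF False] by (metis rangeI)
    qed
    then show ?thesis by auto
  qed
  ultimately show ?thesis by (simp add: hm_def)
qed

definition rl :: "(real \<Rightarrow> real) \<Rightarrow> real \<Rightarrow> bool" where
  "rl f x \<longleftrightarrow> (\<exists>e>0. \<exists>m k. \<forall>y\<in>{x..x+e}. f y = m * y + k)"

lemma pl0_rl: assumes "pl0 f" shows "rl f x"
proof -
  have id_out: "\<And>x. x \<notin> {0..1} \<Longrightarrow> f x = x" and f0: "f 0 = 0" and f1: "f 1 = 1"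
    using assms by (auto simp: pl0_def)
  obtain P where P: "finite P" "P \<subseteq> {0..1}" "{0,1} \<subseteq> P"
    and lin: "\<forall>a\<in>P. \<forall>b\<in>P. a < b \<and> {a<..<b} \<inter> P = {} \<longrightarrow>
           (\<exists>m c. \<forall>x\<in>{a..b}. f x = m * x + c)"
    using assms unfolding pl0_def by blast
  show ?thesis
  proof (cases "x < 0")
    case True
    have "\<forall>y\<in>{x..x+(-x)}. f y = 1 * y + 0"
    proof
      fix y assume "y \<in> {x..x+(-x)}"
      then show "f y = 1 * y + 0" using id_out[of y] f0 by (cases "y = 0") auto
    qed
    then have "\<exists>m k. \<forall>y\<in>{x..x+(-x)}. f y = m * y + k" by blast
    then show ?thesis unfolding rl_def using True by (intro exI[of _ "-x"]) auto
  next
    case False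
    show ?thesis
    proof (cases "x \<ge> 1")
      case True
      have "\<forall>y\<in>{x..x+1}. f y = 1 * y + 0"
      proof
        fix y assume "y \<in> {x..x+1}"
        then show "f y = 1 * y + 0" using id_out[of y] f1 True by (cases "y = 1") auto
      qed
      then have "\<exists>m k. \<forall>y\<in>{x..x+1}. f y = m * y + k" by blast
      then show ?thesis unfolding rl_def by (intro exI[of _ 1]) auto
    next
      case False2: False
      define q where "q = Min {p\<in>P. x < p}"
      define p where "p = Max {p\<in>P. p \<le> x}"
      have fq: "finite {p\<in>P. x < p}" "{p\<in>P. x < p} \<noteq> {}" using P False2 by auto
      have fp: "finite {p\<in>P. p \<le> x}" "{p\<in>P. p \<le> x} \<noteq> {}" using P False by auto
      have q: "q \<in> P" "x < q" using Min_in[OF fq] unfolding q_def by auto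
      have p: "p \<in> P" "p \<le> x" using Max_in[OF fp] unfolding p_def by auto
      have emp: "{p<..<q} \<inter> P = {}"
      proof (rule ccontr)
        assume "{p<..<q} \<inter> P \<noteq> {}"
        then obtain z where z: "z \<in> P" "p < z" "z < q" by auto
        show False
        proof (cases "z \<le> x")
          case True
          then have "z \<le> p" unfolding p_def using fp z by (intro Max_ge) auto
          then show False using z by simp
        next
          case False
          then have "q \<le> z" unfolding q_def using fq z by (intro Min_le) auto
          then show False using z by simp
        qed
      qed
      have pq: "p < q" using p(2) q(2) by simp
      obtain m c where mc: "\<forall>y\<in>{p..q}. f y = m * y + c"
        using lin[rule_format, OF p(1) q(1)] pq emp by blast
      have "\<forall>y\<in>{x..x+(q-x)}. f y = m * y + c" using mc p(2) by auto
      then have "\<exists>m c. \<forall>y\<in>{x..x+(q-x)}. f y = m * y + c" by blast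
      then show ?thesis unfolding rl_def using q(2) by (intro exI[of _ "q - x"]) auto
    qed
  qed
qed

lemma rl_comp:
  assumes rf: "rl f (g x)" and rg: "rl g x" and hg: "hm g"
  shows "rl (\<lambda>y. f (g y)) x"
proof -
  obtain e1 m1 k1 where e1: "e1 > 0" "\<forall>y\<in>{x..x+e1}. g y = m1 * y + k1" using rg by (auto simp: rl_def)
  obtain e2 m2 k2 where e2: "e2 > 0" "\<forall>y\<in>{g x..g x+e2}. f y = m2 * y + k2" using rf by (auto simp: rl_def)
  obtain d where d: "d > 0" "\<forall>y. dist y x < d \<longrightarrow> dist (g y) (g x) < e2"
    using hm_cont[OF hg, of x] e2(1) unfolding continuous_at_eps_delta by blast
  define e where "e = min e1 (d/2)"
  have "\<forall>y\<in>{x..x+e}. f (g y) = (m2*m1) * y + (m2 * k1 + k2)"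
  proof
    fix y assume y: "y \<in> {x..x+e}"
    then have "dist y x < d" using d e_def by (auto simp: dist_real_def)
    then have "dist (g y) (g x) < e2" using d by auto
    moreover have "g x \<le> g y" using y hm_le_iff[OF hg] by auto
    ultimately have "g y \<in> {g x..g x+e2}" by (auto simp: dist_real_def)
    then have fgy: "f (g y) = m2 * g y + k2" using e2 by auto
    have gy: "g y = m1 * y + k1" using e1 y e_def by auto
    show "f (g y) = (m2*m1) * y + (m2 * k1 + k2)" by (subst fgy, subst gy) (simp add: algebra_simps)
  qed
  moreover have "e > 0" using e1 d e_def by auto
  ultimately show ?thesis unfolding rl_def by blast
qed

lemma rl_inv:
  assumes rf: "rl f x" and hf: "hm f"
  shows "rl (inv f) (f x)"
proof -
  obtain e m k where e: "e > 0" "\<forall>y\<in>{x..x+e}. f y = m * y + k" using rf by (auto simp: rl_def)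
  have fx: "f x = m * x + k" and fxe: "f (x+e) = m*(x+e) + k" using e by auto
  have "f x < f (x+e)" using hm_mono[OF hf, of x "x+e"] e(1) by simp
  then have "m*x + k < m*(x+e) + k" using fx fxe by simp
  then have "m * e > 0" by (simp add: algebra_simps)
  then have mpos: "m > 0" using e(1) by (simp add: zero_less_mult_iff)
  have "\<forall>y\<in>{f x..f x + m*e}. inv f y = (1/m) * y + (- k/m)"
  proof
    fix y assume y: "y \<in> {f x..f x + m*e}"
    define z where "z = (y - k)/m"
    have "m * z + k = y" using mpos z_def by (simp add: field_simps)
    moreover have "z \<in> {x..x+e}"
    proof -
      have "m * x \<le> y - k" "y - k \<le> m * (x + e)" using y fx by (auto simp: algebra_simps)
      then show ?thesis unfolding z_def using mpos by (simp add: pos_le_divide_eq pos_divide_le_eq mult.commute)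
    qed
    ultimately have "f z = y" using e by auto
    then have "inv f y = z" using hm_f_inv[OF hf, of z] by simp
    then show "inv f y = (1/m) * y + (- k/m)" unfolding z_def by (simp add: diff_divide_distrib)
  qed
  moreover have "m * e > 0" using mpos e by simp
  ultimately show ?thesis unfolding rl_def by blast
qed

definition prl :: "(real \<Rightarrow> real) \<Rightarrow> bool" where
  "prl f \<longleftrightarrow> hm f \<and> (\<forall>x. rl f x)"

lemma prl_hm: "prl f \<Longrightarrow> hm f" by (simp add: prl_def)
lemma prl_rl: "prl f \<Longrightarrow> rl f x" by (simp add: prl_def)

lemma pl0_prl: "pl0 f \<Longrightarrow> prl f"
  by (simp add: prl_def pl0_hm pl0_rl)

lemma prl_comp: "prl f \<Longrightarrow> prl g \<Longrightarrow> prl (\<lambda>x. f (g x))"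
  unfolding prl_def by (auto intro: hm_comp rl_comp)

lemma prl_inv: assumes "prl f" shows "prl (inv f)"
proof -
  have hf: "hm f" using assms by (simp add: prl_def)
  have "rl (inv f) y" for y
    using rl_inv[OF prl_rl[OF assms, of "inv f y"] hf] hm_inv_f[OF hf, of y] by simp
  then show ?thesis using hm_inv[OF hf] by (simp add: prl_def)
qed




definition orb :: "(real \<Rightarrow> real) \<Rightarrow> real \<Rightarrow> real \<Rightarrow> bool" where
  "orb u p q \<longleftrightarrow> p < q \<and> u p = p \<and> u q = q \<and> (\<forall>x\<in>{p<..<q}. u x \<noteq> x)"

lemma orb_maps: assumes "hm u" "orb u p q" "x \<in> {p<..<q}" shows "u x \<in> {p<..<q}"
proof -
  have "u p < u x" "u x < u q" using assms hm_mono[OF assms(1)] by auto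
  then show ?thesis using assms(2) by (auto simp: orb_def)
qed

lemma funpow_Suc_app: "(u ^^ Suc n) x = u ((u ^^ n) x)" by simp

lemma orb_funpow: assumes "hm u" "orb u p q" "x \<in> {p<..<q}" shows "(u ^^ n) x \<in> {p<..<q}"
  by (induction n) (use assms orb_maps in auto)

lemma hm_funpow: assumes "hm u" shows "hm (u ^^ n)"
proof (induction n)
  case 0 then show ?case using hm_id by (simp add: id_def)
next
  case (Suc n)
  have "(u ^^ Suc n) = (\<lambda>x. u ((u ^^ n) x))" by (simp add: fun_eq_iff)
  then show ?case using hm_comp[OF assms Suc.IH] by simp
qed

lemma iter_small:
  assumes hu: "hm u" and o: "orb u p q" and x: "x \<in> {p<..<q}" and ux: "u x < x" and e: "e > 0"
  shows "\<exists>n. (u ^^ n) x < p + e"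
proof -
  define X where "X n = (u ^^ n) x" for n
  have XS: "X (Suc n) < X n" for n
  proof (induction n)
    case 0 then show ?case using ux by (simp add: X_def)
  next
    case (Suc n)
    then show ?case using hm_mono[OF hu] by (simp add: X_def)
  qed
  have dec: "decseq X" using XS by (simp add: decseq_Suc_iff less_imp_le)
  have XJ: "X n \<in> {p<..<q}" for n using orb_funpow[OF hu o x] by (simp add: X_def)
  have bd: "\<forall>i. p \<le> X i" using XJ by (simp add: less_imp_le)
  obtain L where L: "X \<longlonglongrightarrow> L" "\<forall>i. L \<le> X i" using decseq_convergent[OF dec bd] by blast
  have Lp: "p \<le> L" using LIMSEQ_le_const[OF L(1), of p] bd by auto
  have Lq: "L < q" using L(2)[rule_format, of 0] XJ[of 0] by auto
  have "(\<lambda>n. u (X n)) \<longlonglongrightarrow> u L" using isCont_tendsto_compose[OF hm_cont[OF hu] L(1)] .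
  moreover have "(\<lambda>n. u (X n)) = (\<lambda>n. X (Suc n))" by (simp add: X_def fun_eq_iff)
  moreover have "(\<lambda>n. X (Suc n)) \<longlonglongrightarrow> L" using LIMSEQ_Suc[OF L(1)] .
  ultimately have "u L = L" using LIMSEQ_unique by metis
  then have "L = p" using Lp Lq o by (force simp: orb_def)
  then have "eventually (\<lambda>n. X n < p + e) sequentially"
    using order_tendstoD(2)[OF L(1), of "p+e"] e by simp
  then obtain N where "\<forall>n\<ge>N. X n < p + e" by (auto simp: eventually_sequentially)
  then show ?thesis unfolding X_def by auto
qed

lemma orb_inv: assumes hu: "hm u" and o: "orb u p q" shows "orb (inv u) p q"
proof -
  have "inv u p = p" "inv u q = q" using o hm_f_inv[OF hu] by (metis orb_def)+
  moreover have "inv u x \<noteq> x" if "x \<in> {p<..<q}" for x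
    using o that hm_inv_f[OF hu, of x] unfolding orb_def by metis
  ultimately show ?thesis using o by (simp add: orb_def)
qed

lemma comm_inv:
  assumes hu: "hm u" and o: "orb u p q" and c: "\<forall>y\<in>{p<..<q}. v (u y) = u (v y)"
  shows "\<forall>y\<in>{p<..<q}. v (inv u y) = inv u (v y)"
proof
  fix y assume y: "y \<in> {p<..<q}"
  have "inv u y \<in> {p<..<q}" using orb_maps[OF hm_inv[OF hu] orb_inv[OF hu o] y] .
  then have "v (u (inv u y)) = u (v (inv u y))" using c by blast
  then have "v y = u (v (inv u y))" using hm_inv_f[OF hu] by simp
  then show "v (inv u y) = inv u (v y)" using hm_f_inv[OF hu] by simp
qed

lemma comm_funpow:
  assumes hu: "hm u" and o: "orb u p q" and c: "\<forall>y\<in>{p<..<q}. v (u y) = u (v y)"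
    and x: "x \<in> {p<..<q}"
  shows "v ((u ^^ n) x) = (u ^^ n) (v x)"
proof (induction n)
  case 0 then show ?case by simp
next
  case (Suc n)
  have "(u ^^ n) x \<in> {p<..<q}" using orb_funpow[OF hu o x] .
  then show ?case using c Suc.IH by simp
qed

lemma dir:
  assumes hu: "hm u" and o: "orb u p q" and x: "x \<in> {p<..<q}"
  shows "\<exists>w. hm w \<and> orb w p q \<and> w x < x \<and>
     (\<forall>v. (\<forall>y\<in>{p<..<q}. v (u y) = u (v y)) \<longrightarrow> (\<forall>y\<in>{p<..<q}. v (w y) = w (v y)))"
proof (cases "u x < x")
  case True then show ?thesis using hu o by blast
next
  case False
  moreover have "u x \<noteq> x" using o x by (auto simp: orb_def)
  ultimately have "u x > x" by simp
  then have "inv u (u x) > inv u x" using hm_mono[OF hm_inv[OF hu]] by blast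
  then have "inv u x < x" using hm_f_inv[OF hu] by simp
  then show ?thesis using hm_inv[OF hu] orb_inv[OF hu o] comm_inv[OF hu o] by blast
qed

lemma agree_aux:
  assumes hu: "hm u" and o: "orb u p q"
    and c1: "\<forall>y\<in>{p<..<q}. v1 (u y) = u (v1 y)"
    and c2: "\<forall>y\<in>{p<..<q}. v2 (u y) = u (v2 y)"
    and e: "e > 0" and ag: "\<forall>y\<in>{p<..<p+e}. v1 y = v2 y"
    and x: "x \<in> {p<..<q}" and ux: "u x < x"
  shows "v1 x = v2 x"
proof -
  obtain n where n: "(u ^^ n) x < p + e" using iter_small[OF hu o x ux e] by blast
  have "(u ^^ n) x \<in> {p<..<q}" using orb_funpow[OF hu o x] .
  then have "v1 ((u ^^ n) x) = v2 ((u ^^ n) x)" using ag n by auto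
  then have "(u ^^ n) (v1 x) = (u ^^ n) (v2 x)"
    using comm_funpow[OF hu o c1 x] comm_funpow[OF hu o c2 x] by simp
  then show ?thesis using hm_inj[OF hm_funpow[OF hu]] by blast
qed

lemma agree:
  assumes hu: "hm u" and o: "orb u p q"
    and c1: "\<forall>y\<in>{p<..<q}. v1 (u y) = u (v1 y)"
    and c2: "\<forall>y\<in>{p<..<q}. v2 (u y) = u (v2 y)"
    and e: "e > 0" and ag: "\<forall>y\<in>{p<..<p+e}. v1 y = v2 y"
  shows "\<forall>x\<in>{p<..<q}. v1 x = v2 x"
proof
  fix x assume x: "x \<in> {p<..<q}"
  obtain w where w: "hm w" "orb w p q" "w x < x"
    and cw: "\<forall>v. (\<forall>y\<in>{p<..<q}. v (u y) = u (v y)) \<longrightarrow> (\<forall>y\<in>{p<..<q}. v (w y) = w (v y))"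
    using dir[OF hu o x] by blast
  have cw1: "\<forall>y\<in>{p<..<q}. v1 (w y) = w (v1 y)" using cw c1 by blast
  have cw2: "\<forall>y\<in>{p<..<q}. v2 (w y) = w (v2 y)" using cw c2 by blast
  show "v1 x = v2 x"
    using agree_aux[OF w(1,2) cw1 cw2 e ag x w(3)] .
qed

lemma fixid:
  assumes hu: "hm u" and o: "orb u p q"
    and c: "\<forall>y\<in>{p<..<q}. v (u y) = u (v y)"
    and x0: "x0 \<in> {p<..<q}" and vx0: "v x0 = x0" and r: "rl v p"
  shows "\<forall>x\<in>{p<..<q}. v x = x"
proof -
  obtain e m k where e: "e > 0" "\<forall>y\<in>{p..p+e}. v y = m * y + k" using r by (auto simp: rl_def)
  obtain w where w: "hm w" "orb w p q" "w x0 < x0"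
    and cw: "\<forall>v. (\<forall>y\<in>{p<..<q}. v (u y) = u (v y)) \<longrightarrow> (\<forall>y\<in>{p<..<q}. v (w y) = w (v y))"
    using dir[OF hu o x0] by blast
  have cv: "\<forall>y\<in>{p<..<q}. v (w y) = w (v y)" using cw c by blast
  obtain n where n: "(w ^^ n) x0 < p + e" using iter_small[OF w(1,2) x0 w(3) e(1)] by blast
  define y1 where "y1 = (w ^^ n) x0"
  define y2 where "y2 = (w ^^ Suc n) x0"
  have y1J: "y1 \<in> {p<..<q}" "y2 \<in> {p<..<q}" unfolding y1_def y2_def
    by (rule orb_funpow[OF w(1,2) x0])+
  have y21: "y2 < y1"
  proof -
    have "(w ^^ Suc n) x0 < (w ^^ n) x0"
    proof (induction n)
      case 0 then show ?case using w(3) by simp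
    next
      case (Suc n) then show ?case using hm_mono[OF w(1)] by simp
    qed
    then show ?thesis by (simp add: y1_def y2_def)
  qed
  have f1: "v y1 = y1" using comm_funpow[OF w(1,2) cv x0, of n] vx0 y1_def by simp
  have f2: "v y2 = y2" using comm_funpow[OF w(1,2) cv x0, of "Suc n"] vx0 y2_def by simp
  have "y1 \<in> {p..p+e}" "y2 \<in> {p..p+e}" using y1J n y21 y1_def by auto
  then have "m * y1 + k = y1" "m * y2 + k = y2" using e f1 f2 by auto
  then have "(m - 1) * (y1 - y2) = 0" by (simp add: algebra_simps)
  then have m1: "m = 1" using y21 by simp
  then have k0: "k = 0" using \<open>m * y1 + k = y1\<close> by simp
  have ag: "\<forall>y\<in>{p<..<p+e}. v y = (\<lambda>z. z) y" using e m1 k0 by auto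
  have cid: "\<forall>y\<in>{p<..<q}. (\<lambda>z. z) (u y) = u ((\<lambda>z. z) y)" by simp
  show ?thesis using agree[OF hu o c cid e(1) ag] by simp
qed




definition fr :: "(real \<Rightarrow> real) \<Rightarrow> real set" where
  "fr f = {x. f x = x \<and> (\<forall>e>0. \<exists>y. \<bar>y - x\<bar> < e \<and> f y \<noteq> y)}"

lemma subsing_finite: assumes "\<forall>a\<in>S. \<forall>b\<in>S. a = b" shows "finite S"
proof (cases "S = {}")
  case False
  then obtain x where "x \<in> S" by auto
  then have "S \<subseteq> {x}" using assms by auto
  then show ?thesis using finite_subset by blast
qed simp

lemma fr_finite: assumes "pl0 f" shows "finite (fr f)"
proof -
  have id_out: "\<And>x. x \<notin> {0..1} \<Longrightarrow> f x = x"
    using assms by (auto simp: pl0_def)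
  obtain P where P: "finite P" "P \<subseteq> {0..1}" "{0,1} \<subseteq> P"
    and lin: "\<forall>a\<in>P. \<forall>b\<in>P. a < b \<and> {a<..<b} \<inter> P = {} \<longrightarrow>
           (\<exists>m c. \<forall>x\<in>{a..b}. f x = m * x + c)"
    using assms unfolding pl0_def by blast
  define S where "S pq = {x. fst pq < x \<and> x < snd pq \<and> f x = x \<and>
      (\<forall>z\<in>{fst pq<..<snd pq}. f z = z \<longrightarrow> z = x)}" for pq
  have finS: "finite (S pq)" for pq
    by (rule subsing_finite) (auto simp: S_def)
  have fin: "finite (P \<union> (\<Union>pq\<in>P\<times>P. S pq))" using P(1) finS by auto
  have "fr f \<subseteq> P \<union> (\<Union>pq\<in>P\<times>P. S pq)"
  proof
    fix x assume xfr: "x \<in> fr f"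
    have fx: "f x = x" and ap: "\<And>e. e > 0 \<Longrightarrow> \<exists>y. \<bar>y - x\<bar> < e \<and> f y \<noteq> y"
      using xfr by (auto simp: fr_def)
    show "x \<in> P \<union> (\<Union>pq\<in>P\<times>P. S pq)"
    proof (cases "x \<in> P")
      case True then show ?thesis by simp
    next
      case xP: False
      have x0: "0 < x"
      proof (rule ccontr)
        assume "\<not> 0 < x"
        then have "x < 0" using xP P(3) by (cases "x = 0") auto
        obtain y where y: "\<bar>y - x\<bar> < -x" "f y \<noteq> y" using ap[of "-x"] \<open>x < 0\<close> by auto
        then have "y < 0" by auto
        then show False using id_out[of y] y(2) by auto
      qed
      have x1: "x < 1"
      proof (rule ccontr)
        assume "\<not> x < 1"
        then have "x > 1" using xP P(3) by (cases "x = 1") auto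
        obtain y where y: "\<bar>y - x\<bar> < x - 1" "f y \<noteq> y" using ap[of "x - 1"] \<open>x > 1\<close> by auto
        then have "y > 1" by auto
        then show False using id_out[of y] y(2) by auto
      qed
      define q where "q = Min {p\<in>P. x < p}"
      define p where "p = Max {p\<in>P. p \<le> x}"
      have fq: "finite {p\<in>P. x < p}" "{p\<in>P. x < p} \<noteq> {}" using P x1 by auto
      have fp: "finite {p\<in>P. p \<le> x}" "{p\<in>P. p \<le> x} \<noteq> {}" using P x0 by auto
      have q: "q \<in> P" "x < q" using Min_in[OF fq] unfolding q_def by auto
      have p: "p \<in> P" "p \<le> x" using Max_in[OF fp] unfolding p_def by auto
      have px: "p < x" using p xP by (cases "p = x") auto
      have emp: "{p<..<q} \<inter> P = {}"
      proof (rule ccontr)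
        assume "{p<..<q} \<inter> P \<noteq> {}"
        then obtain z where z: "z \<in> P" "p < z" "z < q" by auto
        show False
        proof (cases "z \<le> x")
          case True
          then have "z \<le> p" unfolding p_def using fp z by (intro Max_ge) auto
          then show False using z by simp
        next
          case False
          then have "q \<le> z" unfolding q_def using fq z by (intro Min_le) auto
          then show False using z by simp
        qed
      qed
      have pq: "p < q" using px q(2) by simp
      obtain m c where mc: "\<forall>y\<in>{p..q}. f y = m * y + c"
        using lin[rule_format, OF p(1) q(1)] pq emp by blast
      have "\<forall>z\<in>{p<..<q}. f z = z \<longrightarrow> z = x"
      proof (intro ballI impI)
        fix z assume z: "z \<in> {p<..<q}" "f z = z"
        show "z = x"
        proof (rule ccontr)
          assume zx: "z \<noteq> x"
          have "m * z + c = z" "m * x + c = x" using mc z fx px q(2) by auto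
          then have "(m - 1) * (z - x) = 0" by (simp add: algebra_simps)
          then have m1: "m = 1" using zx by simp
          then have c0: "c = 0" using \<open>m * x + c = x\<close> by simp
          have mpos: "0 < min (x - p) (q - x)" using px q(2) by simp
          obtain y where y: "\<bar>y - x\<bar> < min (x - p) (q - x)" "f y \<noteq> y"
            using ap[OF mpos] by blast
          then have "y \<in> {p..q}" by auto
          then show False using mc m1 c0 y(2) by auto
        qed
      qed
      then have "x \<in> S (p, q)" unfolding S_def using px q(2) fx by (simp only: fst_conv snd_conv mem_Collect_eq)
      moreover have "(p, q) \<in> P \<times> P" using p(1) q(1) by simp
      ultimately show ?thesis by (intro UnI2 UN_I)
    qed
  qed
  then show ?thesis using finite_subset[OF _ fin] by simp
qed

lemma fin_mono_fix:
  assumes fE: "finite E" and sm: "strict_mono (\<phi>::real \<Rightarrow> real)" and sub: "\<phi> ` E \<subseteq> E"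
  shows "\<forall>x\<in>E. \<phi> x = x"
proof (rule ccontr)
  assume "\<not> (\<forall>x\<in>E. \<phi> x = x)"
  then have ne: "{x\<in>E. \<phi> x \<noteq> x} \<noteq> {}" by auto
  have fb: "finite {x\<in>E. \<phi> x \<noteq> x}" using fE by auto
  define x where "x = Min {x\<in>E. \<phi> x \<noteq> x}"
  have x: "x \<in> E" "\<phi> x \<noteq> x" using Min_in[OF fb ne] x_def by auto
  have good: "\<And>y. y \<in> E \<Longrightarrow> y < x \<Longrightarrow> \<phi> y = y"
  proof (rule ccontr)
    fix y assume y: "y \<in> E" "y < x" "\<phi> y \<noteq> y"
    then have "x \<le> y" unfolding x_def using fb by (intro Min_le) auto
    then show False using y by simp
  qed
  have inj: "inj_on \<phi> E" using sm strict_mono_imp_inj_on by blast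
  have eq: "\<phi> ` E = E"
    using card_image[OF inj] card_subset_eq[OF fE sub] by simp
  show False
  proof (cases "\<phi> x < x")
    case True
    have "\<phi> x \<in> E" using x sub by auto
    then have "\<phi> (\<phi> x) = \<phi> x" using good True by blast
    then have "\<phi> x = x" using sm strict_mono_eq by metis
    then show False using x by simp
  next
    case False
    then have gt: "\<phi> x > x" using x by simp
    obtain z where z: "z \<in> E" "x = \<phi> z" using x eq by blast
    show False
    proof (cases "z < x")
      case True then show False using good[OF z(1)] z by simp
    next
      case False
      then have "x \<le> z" by simp
      then have "\<phi> x \<le> \<phi> z" using sm by (simp add: strict_mono_less_eq)
      then show False using z gt by simp
    qed
  qed
qed

lemma fr_pres:
  assumes hP: "hm \<Phi>" and pres: "\<forall>x. f (\<Phi> x) = \<Phi> x \<longleftrightarrow> f x = x" and x: "x \<in> fr f"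
  shows "\<Phi> x \<in> fr f"
proof -
  have fx: "f x = x" and ap: "\<And>e. e > 0 \<Longrightarrow> \<exists>y. \<bar>y - x\<bar> < e \<and> f y \<noteq> y"
    using x by (auto simp: fr_def)
  have "\<exists>y. \<bar>y - \<Phi> x\<bar> < e \<and> f y \<noteq> y" if e: "e > 0" for e
  proof -
    obtain d where d: "d > 0" "\<forall>y. dist y x < d \<longrightarrow> dist (\<Phi> y) (\<Phi> x) < e"
      using hm_cont[OF hP, of x] e unfolding continuous_at_eps_delta by blast
    obtain y where y: "\<bar>y - x\<bar> < d" "f y \<noteq> y" using ap d(1) by blast
    have "\<bar>\<Phi> y - \<Phi> x\<bar> < e" using d y by (auto simp: dist_real_def)
    moreover have "f (\<Phi> y) \<noteq> \<Phi> y" using pres y(2) by blast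
    ultimately show ?thesis by blast
  qed
  moreover have "f (\<Phi> x) = \<Phi> x" using pres fx by blast
  ultimately show ?thesis by (simp add: fr_def)
qed

lemma cont_right:
  assumes hg: "hm g" and gc: "g c = c" and e: "e > 0"
  shows "\<exists>d>0. \<forall>y\<in>{c..c+d}. g y \<in> {c..c+e}"
proof -
  obtain d where d: "d > 0" "\<forall>y. dist y c < d \<longrightarrow> dist (g y) (g c) < e"
    using hm_cont[OF hg, of c] e unfolding continuous_at_eps_delta by blast
  have "\<forall>y\<in>{c..c+d/2}. g y \<in> {c..c+e}"
  proof
    fix y assume y: "y \<in> {c..c+d/2}"
    then have "dist (g y) (g c) < e" using d by (auto simp: dist_real_def)
    moreover have "g c \<le> g y" using y hm_le_iff[OF hg] by auto
    ultimately show "g y \<in> {c..c+e}" using gc by (auto simp: dist_real_def)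
  qed
  then show ?thesis using d(1) by (intro exI[of _ "d/2"]) auto
qed

lemma germ_comm:
  assumes pF: "prl F" and pG: "prl G" and Fc: "F c = c" and Gc: "G c = c"
  shows "\<exists>e>0. \<forall>z\<in>{c..c+e}. F (G z) = G (F z)"
proof -
  obtain e1 m1 k1 where e1: "e1 > 0" "\<forall>y\<in>{c..c+e1}. F y = m1 * y + k1"
    using prl_rl[OF pF, of c] by (auto simp: rl_def)
  obtain e2 m2 k2 where e2: "e2 > 0" "\<forall>y\<in>{c..c+e2}. G y = m2 * y + k2"
    using prl_rl[OF pG, of c] by (auto simp: rl_def)
  have k1: "k1 = c - m1 * c" using e1 Fc by force
  have k2: "k2 = c - m2 * c" using e2 Gc by force
  obtain d1 where d1: "d1 > 0" "\<forall>y\<in>{c..c+d1}. F y \<in> {c..c+e2}"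
    using cont_right[OF prl_hm[OF pF] Fc e2(1)] by blast
  obtain d2 where d2: "d2 > 0" "\<forall>y\<in>{c..c+d2}. G y \<in> {c..c+e1}"
    using cont_right[OF prl_hm[OF pG] Gc e1(1)] by blast
  define e where "e = min (min e1 e2) (min d1 d2)"
  have "\<forall>z\<in>{c..c+e}. F (G z) = G (F z)"
  proof
    fix z assume z: "z \<in> {c..c+e}"
    have Gz: "G z = m2 * z + k2" using e2 z e_def by auto
    have Fz: "F z = m1 * z + k1" using e1 z e_def by auto
    have "F (G z) = m1 * G z + k1" using e1 d2 z e_def by auto
    moreover have "G (F z) = m2 * F z + k2" using e2 d1 z e_def by auto
    ultimately show "F (G z) = G (F z)" unfolding Gz Fz k1 k2 by (simp add: algebra_simps)
  qed
  moreover have "e > 0" using e1 e2 d1 d2 e_def by simp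
  ultimately show ?thesis by blast
qed




lemma claim:
  fixes f0 f1 g h1 h2 :: "real \<Rightarrow> real"
  assumes p0: "pl0 f0" and p1: "pl0 f1"
    and gdef: "g = (\<lambda>x. inv f1 (f0 x))"
    and h1def: "h1 = (\<lambda>x. f0 (f1 (inv f0 x)))"
    and h2def: "h2 = (\<lambda>x. f0 (f0 (f1 (inv f0 (inv f0 x)))))"
    and r1: "\<forall>x. g (h1 x) = h1 (g x)"
    and r2: "\<forall>x. g (h2 x) = h2 (g x)"
    and fa: "f0 a = a" and f1a: "f1 a \<noteq> a"
  shows "\<exists>c d. c < a \<and> a < d \<and> (\<forall>x\<in>{c<..<d}. f0 x = x)"
proof -
  define i0 where "i0 = inv f0"
  define i1 where "i1 = inv f1"
  have P0: "prl f0" and P1: "prl f1" using p0 p1 pl0_prl by auto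
  have Pi0: "prl i0" and Pi1: "prl i1" using prl_inv P0 P1 i0_def i1_def by auto
  have H0: "hm f0" and H1: "hm f1" and Hi0: "hm i0" and Hi1: "hm i1"
    using P0 P1 Pi0 Pi1 prl_hm by auto
  have e0a: "\<And>x. f0 (i0 x) = x" and e0b: "\<And>x. i0 (f0 x) = x"
    using hm_inv_f[OF H0] hm_f_inv[OF H0] i0_def by auto
  have e1a: "\<And>x. f1 (i1 x) = x" and e1b: "\<And>x. i1 (f1 x) = x"
    using hm_inv_f[OF H1] hm_f_inv[OF H1] i1_def by auto
  have gd: "\<And>x. g x = i1 (f0 x)" using gdef i1_def by simp
  have h1d: "\<And>x. h1 x = f0 (f1 (i0 x))" using h1def i0_def by simp
  have h2d: "\<And>x. h2 x = f0 (f0 (f1 (i0 (i0 x))))" using h2def i0_def by simp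
  have Pg: "prl g" unfolding gd[abs_def] using prl_comp[OF Pi1 P0] .
  have Ph1: "prl h1" unfolding h1d[abs_def]
    using prl_comp[OF P0 prl_comp[OF P1 Pi0]] .
  have Ph2: "prl h2" unfolding h2d[abs_def]
    using prl_comp[OF P0 prl_comp[OF P0 prl_comp[OF P1 prl_comp[OF Pi0 Pi0]]]] .
  have Hg: "hm g" and Hh1: "hm h1" and Hh2: "hm h2" using Pg Ph1 Ph2 prl_hm by auto
  have id_out1: "\<And>x. x \<notin> {0..1} \<Longrightarrow> f1 x = x" and f10: "f1 0 = 0" and f11: "f1 1 = 1"
    using p1 by (auto simp: pl0_def)
  have a01: "0 < a" "a < 1"
  proof -
    have "a \<in> {0..1}" using id_out1 f1a by blast
    moreover have "a \<noteq> 0" "a \<noteq> 1" using f1a f10 f11 by auto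
    ultimately show "0 < a" "a < 1" by auto
  qed
  have clF: "closed {x. f1 x = x}"
    using closed_Collect_eq[OF hm_cont_on[OF H1] continuous_on_id] by simp
  define Sc where "Sc = {x. f1 x = x} \<inter> {..a}"
  define Sd where "Sd = {x. f1 x = x} \<inter> {a..}"
  define c where "c = Sup Sc"
  define d where "d = Inf Sd"
  have cS: "c \<in> Sc" unfolding c_def
    by (rule closed_contains_Sup) (use f10 a01 clF in \<open>auto simp: Sc_def intro: closed_Int\<close>)
  have dS: "d \<in> Sd" unfolding d_def
    by (rule closed_contains_Inf) (use f11 a01 clF in \<open>auto simp: Sd_def intro: closed_Int\<close>)
  have f1c: "f1 c = c" and ca: "c < a" using cS f1a by (auto simp: Sc_def, metis order_le_less)
  have f1d: "f1 d = d" and ad: "a < d" using dS f1a by (auto simp: Sd_def, metis order_le_less)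
  have nofix: "\<forall>x\<in>{c<..<d}. f1 x \<noteq> x"
  proof (intro ballI notI)
    fix x assume x: "x \<in> {c<..<d}" "f1 x = x"
    show False
    proof (cases "x \<le> a")
      case True
      then have "x \<in> Sc" using x by (simp add: Sc_def)
      then have "x \<le> c" unfolding c_def by (rule cSup_upper) (auto simp: Sc_def bdd_above_def)
      then show False using x by simp
    next
      case False
      then have "x \<in> Sd" using x by (simp add: Sd_def)
      then have "d \<le> x" unfolding d_def by (rule cInf_lower) (auto simp: Sd_def bdd_below_def)
      then show False using x by simp
    qed
  qed
  have orb1: "orb f1 c d" using f1c f1d ca ad nofix by (simp add: orb_def)
  have cfr: "c \<in> fr f1"
  proof -
    have "\<exists>y. \<bar>y - c\<bar> < e \<and> f1 y \<noteq> y" if e: "e > 0" for e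
    proof (intro exI conjI)
      show "\<bar>min (c + e/2) a - c\<bar> < e" using e ca by auto
      have "min (c + e/2) a \<in> {c<..<d}" using e ca ad by (simp add: min_def)
      then show "f1 (min (c + e/2) a) \<noteq> min (c + e/2) a" using nofix by blast
    qed
    then show ?thesis using f1c by (simp add: fr_def)
  qed
  have dfr: "d \<in> fr f1"
  proof -
    have "\<exists>y. \<bar>y - d\<bar> < e \<and> f1 y \<noteq> y" if e: "e > 0" for e
    proof (intro exI conjI)
      show "\<bar>max (d - e/2) a - d\<bar> < e" using e ad by auto
      have "max (d - e/2) a \<in> {c<..<d}" using e ca ad by (simp add: max_def)
      then show "f1 (max (d - e/2) a) \<noteq> max (d - e/2) a" using nofix by blast
    qed
    then show ?thesis using f1d by (simp add: fr_def)
  qed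
  define \<Phi>1 where "\<Phi>1 x = i0 (i1 (f0 (f0 x)))" for x
  define \<Phi>2 where "\<Phi>2 x = i0 (i0 (i1 (f0 (f0 (f0 x)))))" for x
  have HP1: "hm \<Phi>1" unfolding \<Phi>1_def[abs_def]
    using hm_comp[OF Hi0 hm_comp[OF Hi1 hm_comp[OF H0 H0]]] .
  have HP2: "hm \<Phi>2" unfolding \<Phi>2_def[abs_def]
    using hm_comp[OF Hi0 hm_comp[OF Hi0 hm_comp[OF Hi1 hm_comp[OF H0 hm_comp[OF H0 H0]]]]] .
  have fixc1: "\<And>y. h1 y = y \<longleftrightarrow> h1 (g y) = g y"
    using r1 hm_inj[OF Hg] by metis
  have fixc2: "\<And>y. h2 y = y \<longleftrightarrow> h2 (g y) = g y"
    using r2 hm_inj[OF Hg] by metis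
  have pres1: "\<forall>x. f1 (\<Phi>1 x) = \<Phi>1 x \<longleftrightarrow> f1 x = x"
  proof
    fix x
    have A: "h1 (f0 x) = f0 x \<longleftrightarrow> f1 x = x" using h1d e0b hm_inj[OF H0] by simp
    have gf: "g (f0 x) = f0 (\<Phi>1 x)" using gd e0a by (simp add: \<Phi>1_def)
    have B: "h1 (g (f0 x)) = g (f0 x) \<longleftrightarrow> f1 (\<Phi>1 x) = \<Phi>1 x"
      unfolding gf using h1d e0b hm_inj[OF H0] by simp
    show "f1 (\<Phi>1 x) = \<Phi>1 x \<longleftrightarrow> f1 x = x" using A B fixc1 by blast
  qed
  have pres2: "\<forall>x. f1 (\<Phi>2 x) = \<Phi>2 x \<longleftrightarrow> f1 x = x"
  proof
    fix x
    have A: "h2 (f0 (f0 x)) = f0 (f0 x) \<longleftrightarrow> f1 x = x" using h2d e0b hm_inj[OF H0] by simp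
    have gf: "g (f0 (f0 x)) = f0 (f0 (\<Phi>2 x))" using gd e0a by (simp add: \<Phi>2_def)
    have B: "h2 (g (f0 (f0 x))) = g (f0 (f0 x)) \<longleftrightarrow> f1 (\<Phi>2 x) = \<Phi>2 x"
      unfolding gf using h2d e0b hm_inj[OF H0] by simp
    show "f1 (\<Phi>2 x) = \<Phi>2 x \<longleftrightarrow> f1 x = x" using A B fixc2 by blast
  qed
  have finfr: "finite (fr f1)" using fr_finite[OF p1] .
  have fix1: "\<forall>x\<in>fr f1. \<Phi>1 x = x"
    using fin_mono_fix[OF finfr, of \<Phi>1] HP1 fr_pres[OF HP1 pres1] by (auto simp: hm_def)
  have fix2: "\<forall>x\<in>fr f1. \<Phi>2 x = x"
    using fin_mono_fix[OF finfr, of \<Phi>2] HP2 fr_pres[OF HP2 pres2] by (auto simp: hm_def)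
  have gc1: "g (f0 c) = f0 c"
    using fix1 cfr gd e0a by (metis \<Phi>1_def)
  have gd1: "g (f0 d) = f0 d"
    using fix1 dfr gd e0a by (metis \<Phi>1_def)
  have gc2: "g (f0 (f0 c)) = f0 (f0 c)"
    using fix2 cfr gd e0a by (metis \<Phi>2_def)
  have gd2: "g (f0 (f0 d)) = f0 (f0 d)"
    using fix2 dfr gd e0a by (metis \<Phi>2_def)
  have mono0: "\<And>x y. x < y \<Longrightarrow> f0 x < f0 y" using hm_mono[OF H0] .
  have monoi0: "\<And>x y. x < y \<Longrightarrow> i0 x < i0 y" using hm_mono[OF Hi0] .
  have ga_ne: "g a \<noteq> a"
  proof
    assume "g a = a"
    then have "i1 a = a" using gd fa by simp
    then have "f1 a = a" using e1a by metis
    then show False using f1a by simp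
  qed
  have P1c: False if x0: "x0 \<in> {f0 c<..<f0 d}" and gx0: "g x0 = x0" for x0
  proof -
    have o: "orb h1 (f0 c) (f0 d)"
    proof -
      have "h1 x \<noteq> x" if x: "x \<in> {f0 c<..<f0 d}" for x
      proof
        assume hx: "h1 x = x"
        have "i0 x \<in> {c<..<d}" using x monoi0[of "f0 c" x] monoi0[of x "f0 d"] e0b by auto
        moreover have "f1 (i0 x) = i0 x" using hx h1d e0a hm_inj[OF H0] by metis
        ultimately show False using nofix by blast
      qed
      then show ?thesis using h1d e0b f1c f1d mono0 ca ad by (simp add: orb_def)
    qed
    have cm: "\<forall>y\<in>{f0 c<..<f0 d}. g (h1 y) = h1 (g y)" using r1 by blast
    have "\<forall>x\<in>{f0 c<..<f0 d}. g x = x" using fixid[OF Hh1 o cm x0 gx0 prl_rl[OF Pg]] .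
    moreover have "a \<in> {f0 c<..<f0 d}" using mono0[OF ca] mono0[OF ad] fa by simp
    ultimately show False using ga_ne by blast
  qed
  have P2c: False if x0: "x0 \<in> {f0 (f0 c)<..<f0 (f0 d)}" and gx0: "g x0 = x0" for x0
  proof -
    have o: "orb h2 (f0 (f0 c)) (f0 (f0 d))"
    proof -
      have "h2 x \<noteq> x" if x: "x \<in> {f0 (f0 c)<..<f0 (f0 d)}" for x
      proof
        assume hx: "h2 x = x"
        have "i0 (i0 x) \<in> {c<..<d}"
          using x monoi0[OF monoi0[of "f0 (f0 c)" x]] monoi0[OF monoi0[of x "f0 (f0 d)"]] e0b by auto
        moreover have "f1 (i0 (i0 x)) = i0 (i0 x)" using hx h2d e0a hm_inj[OF H0] by metis
        ultimately show False using nofix by blast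
      qed
      then show ?thesis using h2d e0b f1c f1d mono0 ca ad by (simp add: orb_def)
    qed
    have cm: "\<forall>y\<in>{f0 (f0 c)<..<f0 (f0 d)}. g (h2 y) = h2 (g y)" using r2 by blast
    have "\<forall>x\<in>{f0 (f0 c)<..<f0 (f0 d)}. g x = x" using fixid[OF Hh2 o cm x0 gx0 prl_rl[OF Pg]] .
    moreover have "a \<in> {f0 (f0 c)<..<f0 (f0 d)}" using mono0[OF mono0[OF ca]] mono0[OF mono0[OF ad]] fa by simp
    ultimately show False using ga_ne by blast
  qed
  have c_eq: "f0 c = c"
  proof (rule ccontr)
    assume "f0 c \<noteq> c"
    then consider "f0 c < c" | "f0 c > c" by linarith
    then show False
    proof cases
      case 1
      have "f0 (f0 c) < f0 c" using mono0[OF 1] .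
      moreover have "f0 c < f0 (f0 d)"
        using mono0[of c "f0 d"] mono0[OF ad] fa ca by simp
      ultimately show False using P2c[of "f0 c"] gc1 by simp
    next
      case 2
      have "f0 c < f0 (f0 c)" using mono0[OF 2] .
      moreover have "f0 (f0 c) < f0 d"
        using mono0[of "f0 c" d] mono0[OF ca] fa ad by simp
      ultimately show False using P1c[of "f0 (f0 c)"] gc2 by simp
    qed
  qed
  have d_eq: "f0 d = d"
  proof (rule ccontr)
    assume "f0 d \<noteq> d"
    then consider "f0 d > d" | "f0 d < d" by linarith
    then show False
    proof cases
      case 1
      have "f0 d < f0 (f0 d)" using mono0[OF 1] .
      moreover have "f0 (f0 c) < f0 d" using c_eq mono0[OF ad] fa ca by simp
      ultimately show False using P2c[of "f0 d"] gd1 by simp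
    next
      case 2
      have "f0 (f0 d) < f0 d" using mono0[OF 2] .
      moreover have "f0 c < f0 (f0 d)" using c_eq mono0[OF mono0[OF ad]] fa ca by simp
      ultimately show False using P1c[of "f0 (f0 d)"] gd2 by simp
    qed
  qed
  have i0c: "i0 c = c" using c_eq e0b by metis
  have i1c: "i1 c = c" using f1c e1b by metis
  have i1d: "i1 d = d" using f1d e1b by metis
  have gnofix: "\<forall>x\<in>{c<..<d}. g x \<noteq> x"
  proof (intro ballI notI)
    fix x assume "x \<in> {c<..<d}" "g x = x"
    then show False using P1c[of x] c_eq d_eq by simp
  qed
  have orbg: "orb g c d" using gnofix gd c_eq d_eq i1c i1d ca ad by (simp add: orb_def)
  have h1c: "h1 c = c" using h1d i0c f1c c_eq by simp
  obtain e where e: "e > 0" "\<forall>z\<in>{c..c+e}. f0 (h1 z) = h1 (f0 z)"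
    using germ_comm[OF P0 Ph1 c_eq h1c] by blast
  obtain e' where e': "e' > 0" "\<forall>y\<in>{c..c+e'}. i0 y \<in> {c..c+e}"
    using cont_right[OF Hi0 i0c e(1)] by blast
  have ag: "\<forall>y\<in>{c<..<c+e'}. h1 y = h2 y"
  proof
    fix y assume y: "y \<in> {c<..<c+e'}"
    then have "i0 y \<in> {c..c+e}" using e' by auto
    then have "f0 (h1 (i0 y)) = h1 (f0 (i0 y))" using e by blast
    then show "h1 y = h2 y" using h1d h2d e0a by simp
  qed
  have cg1: "\<forall>y\<in>{c<..<d}. h1 (g y) = g (h1 y)" using r1 by simp
  have cg2: "\<forall>y\<in>{c<..<d}. h2 (g y) = g (h2 y)" using r2 by simp
  have h12: "\<forall>x\<in>{c<..<d}. h1 x = h2 x" using agree[OF Hg orbg cg1 cg2 e'(1) ag] .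
  have inC: "\<And>x. x \<in> {c<..<d} \<Longrightarrow> f0 x \<in> {c<..<d}"
    using mono0 c_eq d_eq by (metis greaterThanLessThan_iff)
  have cf: "\<forall>y\<in>{c<..<d}. f0 (f1 y) = f1 (f0 y)"
  proof
    fix x assume x: "x \<in> {c<..<d}"
    have "h1 (f0 (f0 x)) = h2 (f0 (f0 x))" using h12 inC[OF inC[OF x]] by blast
    then have "f0 (f1 (f0 x)) = f0 (f0 (f1 x))" using h1d h2d e0b by simp
    then show "f0 (f1 x) = f1 (f0 x)" using hm_inj[OF H0] by metis
  qed
  have "\<forall>x\<in>{c<..<d}. f0 x = x"
    using fixid[OF H1 orb1 cf _ fa prl_rl[OF P0]] ca ad by simp
  then show ?thesis using ca ad by blast
qed

lemma comm_rel:
  assumes ha: "hm a" and hb: "hm b" and c: "pl_comm a b = id"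
  shows "\<forall>x. b (a x) = a (b x)"
proof
  fix x
  have "inv b (inv a (b (a x))) = x"
    using fun_cong[OF c, of x] by (simp add: pl_comm_def pl_mult_def pl_inv_def)
  then have "b (inv b (inv a (b (a x)))) = b x" by simp
  then have "inv a (b (a x)) = b x" using hm_inv_f[OF hb] by simp
  then have "a (inv a (b (a x))) = a (b x)" by simp
  then show "b (a x) = a (b x)" using hm_inv_f[OF ha] by simp
qed

theorem lemma2p4:
  fixes f0 f1 :: "real \<Rightarrow> real" and A :: "real set"
  assumes "pl0 f0" and "pl0 f1"
    and "pl_comm (pl_conj f1 f0) (pl_mult f0 (pl_inv f1)) = id"
    and "pl_comm (pl_mult f0 (pl_inv f1)) (pl_conj f1 (pl_mult f0 f0)) = id"
    and "A \<in> orbitals f0"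
  shows "(\<exists>B \<in> orbitals f1. B \<subseteq> A) \<or> A \<inter> pl_supp f1 = {}"
proof -
  note p0 = assms(1) and p1 = assms(2)
  have H0: "hm f0" and H1: "hm f1" using p0 p1 pl0_hm by auto
  have Hi0: "hm (inv f0)" and Hi1: "hm (inv f1)" using hm_inv H0 H1 by auto
  define g where "g = (\<lambda>x. inv f1 (f0 x))"
  define h1 where "h1 = (\<lambda>x. f0 (f1 (inv f0 x)))"
  define h2 where "h2 = (\<lambda>x. f0 (f0 (f1 (inv f0 (inv f0 x)))))"
  have Hg: "hm g" unfolding g_def using hm_comp[OF Hi1 H0] .
  have Hh1: "hm h1" unfolding h1_def using hm_comp[OF H0 hm_comp[OF H1 Hi0]] .
  have Hh2: "hm h2" unfolding h2_def
    using hm_comp[OF H0 hm_comp[OF H0 hm_comp[OF H1 hm_comp[OF Hi0 Hi0]]]] .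
  have bij0: "bij f0" using H0 by (auto simp: hm_def bij_def strict_mono_imp_inj_on)
  have eqg: "pl_mult f0 (pl_inv f1) = g" by (simp add: g_def pl_mult_def pl_inv_def fun_eq_iff)
  have eq1: "pl_conj f1 f0 = h1"
    by (simp add: h1_def pl_conj_def pl_mult_def pl_inv_def fun_eq_iff)
  have eq2: "pl_conj f1 (pl_mult f0 f0) = h2"
    using o_inv_distrib[OF bij0 bij0]
    by (simp add: h2_def pl_conj_def pl_mult_def pl_inv_def fun_eq_iff)
  have r1: "\<forall>x. g (h1 x) = h1 (g x)" using comm_rel[OF Hh1 Hg] assms(3) eq1 eqg by simp
  have r2': "\<forall>x. h2 (g x) = g (h2 x)" using comm_rel[OF Hg Hh2] assms(4) eq2 eqg by simp
  have r2: "\<forall>x. g (h2 x) = h2 (g x)" using r2' by simp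
  have cl: "\<exists>c d. c < z \<and> z < d \<and> (\<forall>x\<in>{c<..<d}. f0 x = x)" if "f0 z = z" "f1 z \<noteq> z" for z
    using claim[OF p0 p1 g_def h1_def h2_def r1 r2 that] .
  define S0 where "S0 = pl_supp f0"
  have S0d: "S0 = {x. f0 x \<noteq> x}" by (simp add: S0_def pl_supp_def)
  have oS0: "open S0" unfolding S0d
    using open_Collect_neq[OF hm_cont_on[OF H0] continuous_on_id] by simp
  have S01: "S0 \<subseteq> {0..1}" using p0 unfolding S0d pl0_def by auto
  have AC: "A \<in> components S0" using assms(5) by (simp add: orbitals_def S0_def)
  have oA: "open A" using open_components[OF oS0 AC] .
  have cA: "connected A" using in_components_connected[OF AC] .
  have neA: "A \<noteq> {}" using in_components_nonempty[OF AC] .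
  have AS: "A \<subseteq> S0" using in_components_subset[OF AC] .
  have A01: "A \<subseteq> {0..1}" using AS S01 by blast
  have bbA: "bdd_below A" "bdd_above A"
    using bdd_below_mono[OF _ A01] bdd_above_mono[OF _ A01] by auto
  define a where "a = Inf A"
  define b where "b = Sup A"
  have frA: "frontier A \<subseteq> frontier S0" using frontier_of_components_subset[OF AC] .
  have frS: "frontier S0 \<inter> S0 = {}" using oS0 by (simp add: frontier_def interior_open Diff_Int_distrib2)
  have aA: "a \<notin> A"
  proof
    assume "a \<in> A"
    then obtain r where r: "r > 0" "ball a r \<subseteq> A" using oA open_contains_ball by blast
    then have "a - r/2 \<in> A" by (auto simp: dist_real_def)
    then have "a \<le> a - r/2" unfolding a_def using bbA by (simp add: cInf_lower)
    then show False using r by simp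
  qed
  have bA: "b \<notin> A"
  proof
    assume "b \<in> A"
    then obtain r where r: "r > 0" "ball b r \<subseteq> A" using oA open_contains_ball by blast
    then have "b + r/2 \<in> A" by (auto simp: dist_real_def)
    then have "b + r/2 \<le> b" unfolding b_def using cSup_upper bbA(2) by blast
    then show False using r by simp
  qed
  have fa: "f0 a = a"
  proof -
    have "a \<in> closure A" unfolding a_def using closure_contains_Inf[OF neA bbA(1)] .
    then have "a \<in> frontier A" using aA oA by (simp add: frontier_def interior_open)
    then have "a \<notin> S0" using frA frS by blast
    then show ?thesis using S0d by simp
  qed
  have fb: "f0 b = b"
  proof -
    have "b \<in> closure A" unfolding b_def using closure_contains_Sup[OF neA bbA(2)] .
    then have "b \<in> frontier A" using bA oA by (simp add: frontier_def interior_open)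
    then have "b \<notin> S0" using frA frS by blast
    then show ?thesis using S0d by simp
  qed
  have Aab: "A = {a<..<b}"
  proof
    show "A \<subseteq> {a<..<b}"
    proof
      fix x assume x: "x \<in> A"
      have "a \<le> x" "x \<le> b" unfolding a_def b_def using x bbA by (auto intro: cInf_lower cSup_upper)
      moreover have "x \<noteq> a" "x \<noteq> b" using x aA bA by auto
      ultimately show "x \<in> {a<..<b}" by simp
    qed
    show "{a<..<b} \<subseteq> A"
    proof
      fix x assume x: "x \<in> {a<..<b}"
      obtain y1 where y1: "y1 \<in> A" "y1 < x" using x cInf_less_iff[OF neA bbA(1)] a_def by auto
      obtain y2 where y2: "y2 \<in> A" "x < y2" using x less_cSup_iff[OF neA bbA(2)] b_def by auto
      have "is_interval A" using cA is_interval_connected_1 by blast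
      then show "x \<in> A" using y1 y2 unfolding is_interval_1 by (meson less_imp_le)
    qed
  qed
  have f1a: "f1 a = a"
  proof (rule ccontr)
    assume "f1 a \<noteq> a"
    then obtain c d where cd: "c < a" "a < d" "\<forall>x\<in>{c<..<d}. f0 x = x" using cl fa by blast
    obtain y where y: "y \<in> A" "y < d" using cd(2) cInf_less_iff[OF neA bbA(1)] a_def by auto
    have "y > a" using y Aab by auto
    then have "f0 y = y" using cd y by auto
    moreover have "y \<in> S0" using y AS by auto
    ultimately show False using S0d by simp
  qed
  have f1b: "f1 b = b"
  proof (rule ccontr)
    assume "f1 b \<noteq> b"
    then obtain c d where cd: "c < b" "b < d" "\<forall>x\<in>{c<..<d}. f0 x = x" using cl fb by blast
    obtain y where y: "y \<in> A" "c < y" using cd(1) less_cSup_iff[OF neA bbA(2)] b_def by auto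
    have "y < b" using y Aab by auto
    then have "f0 y = y" using cd y by auto
    moreover have "y \<in> S0" using y AS by auto
    ultimately show False using S0d by simp
  qed
  show ?thesis
  proof (cases "A \<inter> pl_supp f1 = {}")
    case True then show ?thesis by simp
  next
    case False
    then obtain x where x: "x \<in> A" "x \<in> pl_supp f1" by auto
    define B where "B = connected_component_set (pl_supp f1) x"
    have Borb: "B \<in> orbitals f1" unfolding B_def orbitals_def using componentsI[OF x(2)] .
    have xB: "x \<in> B" unfolding B_def using connected_component_refl[OF x(2)] by simp
    have BS: "B \<subseteq> pl_supp f1" unfolding B_def by (rule connected_component_subset)
    have iB: "is_interval B" unfolding B_def
      using connected_connected_component is_interval_connected_1 by blast
    have "B \<subseteq> A"
    proof
      fix y assume y: "y \<in> B"
      have xab: "a < x" "x < b" using x Aab by auto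
      have "\<not> y \<le> a"
      proof
        assume "y \<le> a"
        then have "a \<in> B" using iB y xB xab unfolding is_interval_1 by (meson less_imp_le)
        then show False using BS f1a by (auto simp: pl_supp_def)
      qed
      moreover have "\<not> b \<le> y"
      proof
        assume "b \<le> y"
        then have "b \<in> B" using iB y xB xab unfolding is_interval_1 by (meson less_imp_le)
        then show False using BS f1b by (auto simp: pl_supp_def)
      qed
      ultimately show "y \<in> A" using Aab by auto
    qed
    then show ?thesis using Borb by blast
  qed
qed


end
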